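(* Fix revenues $r_i\in[0,1]$ ($i=1,\dots,N$) and penalty $c\in[0,1]$. Let $\mathbf{v},\mathbf{w}\in[0,1]^N$ and $q_v,q_w\in[0,1]$, and let $\mathbf{S}_v^*\in\arg\max_{\mathbf{S}}\mathbb{E}[U(\mathbf{S};\mathbf{v},q_v)]$. Then $$\big|\mathbb{E}[U(\mathbf{S}_v^*;\mathbf{v},q_v)]-\mathbb{E}[U(\mathbf{S}_v^*;\mathbf{w},q_w)]\big|\le\sum_{i\in\mathbf{S}_v^*}\big(2|v_i-w_i|+(N+1)|q_v-q_w|\big).$$
   Context: A sequence $\mathbf{S}=(S_1,\dots,S_m)$ consists of distinct items from $\{1,\dots,N\}$; $I(k)$ denotes the item at position $k$, and the maximum is over all such sequences. For $\mathbf{u}\in[0,1]^N$ and $q\in[0,1]$, $$\mathbb{E}[U(\mathbf{S};\mathbf{u},q)]=\sum_{l=1}^{m} r_{I(l)}u_{I(l)}\,q^{l-1}\prod_{k=1}^{l-1}(1-u_{I(k)})\;-\;c\sum_{k=1}^{m}q^{k-1}(1-q)\prod_{j=1}^{k}(1-u_{I(j)}).$$ (This is the expected payoff when a user scans the sequence, selects item $i$ with probability $u_i$ earning $r_i$, and otherwise abandons with probability $1-q$ at penalty $c$ or continues with probability $q$.) *)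

theory Defs
  imports "HOL-Analysis.Analysis"
begin

definition valid_seq :: "nat \<Rightarrow> nat list \<Rightarrow> bool" where
  "valid_seq N S \<longleftrightarrow> distinct S \<and> set S \<subseteq> {1..N}"

text \<open>Expected utility. Position l (1-based in the paper) is index l-1 here.\<close>
definition exp_util :: "(nat \<Rightarrow> real) \<Rightarrow> real \<Rightarrow> nat list \<Rightarrow> (nat \<Rightarrow> real) \<Rightarrow> real \<Rightarrow> real" where
  "exp_util r c S u q =
     (\<Sum>l<length S. r (S!l) * u (S!l) * q ^ l * (\<Prod>k<l. 1 - u (S!k)))
     - c * (\<Sum>k<length S. q ^ k * (1 - q) * (\<Prod>j\<le>k. 1 - u (S!j)))"

end

theory Submission
  imports Defs
begin

lemma exp_util_Nil: "exp_util r c [] u q = 0"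
  by (simp add: exp_util_def)

lemma exp_util_Cons:
  "exp_util r c (x#xs) u q = r x * u x - c*(1-q)*(1-u x) + q*(1-u x)*exp_util r c xs u q"
proof -
  have A: "(\<Sum>l<length (x#xs). r ((x#xs)!l) * u ((x#xs)!l) * q ^ l * (\<Prod>k<l. 1 - u ((x#xs)!k)))
     = r x * u x + q*(1-u x)*(\<Sum>l<length xs. r (xs!l) * u (xs!l) * q ^ l * (\<Prod>k<l. 1 - u (xs!k)))"
    apply (simp only: length_Cons sum.lessThan_Suc_shift prod.lessThan_Suc_shift nth_Cons_0 nth_Cons_Suc)
    apply (simp add: sum_distrib_left)
    apply (rule sum.cong, simp, simp add: algebra_simps)
    done
  have B: "(\<Sum>k<length (x#xs). q ^ k * (1 - q) * (\<Prod>j\<le>k. 1 - u ((x#xs)!j)))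
     = (1-q)*(1-u x) + q*(1-u x)*(\<Sum>k<length xs. q ^ k * (1 - q) * (\<Prod>j\<le>k. 1 - u (xs!j)))"
    apply (simp only: length_Cons sum.lessThan_Suc_shift prod.atMost_Suc_shift nth_Cons_0 nth_Cons_Suc)
    apply (simp add: sum_distrib_left)
    apply (rule sum.cong, simp, simp add: algebra_simps)
    done
  show ?thesis unfolding exp_util_def A B by (simp add: algebra_simps)
qed

lemma exp_util_bound:
  assumes "\<And>i. i \<in> set xs \<Longrightarrow> 0 \<le> r i \<and> r i \<le> 1 \<and> 0 \<le> u i \<and> u i \<le> 1"
    and "0 \<le> c" "c \<le> 1" "0 \<le> q" "q \<le> 1"
  shows "\<bar>exp_util r c xs u q\<bar> \<le> 1"
  using assms(1)
proof (induction xs)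
  case Nil thus ?case by (simp add: exp_util_Nil)
next
  case (Cons x xs)
  define U where "U = exp_util r c xs u q"
  have U: "-1 \<le> U" "U \<le> 1" using Cons unfolding U_def by auto
  have x: "0 \<le> r x" "r x \<le> 1" "0 \<le> u x" "u x \<le> 1" using Cons.prems by auto
  have a: "0 \<le> 1 - u x" "0 \<le> 1 - q" using x assms by auto
  have P: "0 \<le> q*(1-u x)" using a assms by simp
  have "q*(1-u x)*U \<le> q*(1-u x)*1" using mult_left_mono[OF U(2) P] .
  moreover have "q*(1-u x)*(-1) \<le> q*(1-u x)*U" using mult_left_mono[OF U(1) P] .
  moreover have "c*((1-q)*(1-u x)) \<le> 1*((1-q)*(1-u x))"
    using mult_right_mono[OF assms(3), of "(1-q)*(1-u x)"] a by simp
  moreover have "0 \<le> c*((1-q)*(1-u x))" using a assms by simp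
  moreover have "r x * u x \<le> 1 * u x" using mult_right_mono[OF x(2) x(3)] .
  moreover have "0 \<le> r x * u x" using x by simp
  moreover have "q*(1-u x) \<le> 1*(1-u x)" using mult_right_mono[OF assms(5) a(1)] .
  moreover have "(1-q)*(1-u x) + q*(1-u x) = 1 - u x" by (simp add: algebra_simps)
  moreover have "exp_util r c (x#xs) u q = r x * u x - c*((1-q)*(1-u x)) + q*(1-u x)*U"
    unfolding exp_util_Cons U_def by (simp add: mult.assoc)
  ultimately show ?case unfolding abs_le_iff using x by linarith
qed

lemma exp_util_diff_u:
  assumes "\<And>i. i \<in> set xs \<Longrightarrow> 0 \<le> r i \<and> r i \<le> 1 \<and> 0 \<le> v i \<and> v i \<le> 1 \<and> 0 \<le> w i \<and> w i \<le> 1"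
    and "0 \<le> c" "c \<le> 1" "0 \<le> q" "q \<le> 1"
  shows "\<bar>exp_util r c xs v q - exp_util r c xs w q\<bar> \<le> (\<Sum>x\<leftarrow>xs. 2 * \<bar>v x - w x\<bar>)"
  using assms(1)
proof (induction xs)
  case Nil thus ?case by (simp add: exp_util_Nil)
next
  case (Cons x xs)
  define V where "V = exp_util r c xs v q"
  define W where "W = exp_util r c xs w q"
  have IH: "\<bar>V - W\<bar> \<le> (\<Sum>x\<leftarrow>xs. 2 * \<bar>v x - w x\<bar>)" using Cons unfolding V_def W_def by auto
  have Vb: "\<bar>V\<bar> \<le> 1" unfolding V_def using Cons.prems assms(2-5)
    by (intro exp_util_bound) auto
  have x: "0 \<le> r x" "r x \<le> 1" "0 \<le> v x" "v x \<le> 1" "0 \<le> w x" "w x \<le> 1" using Cons.prems by auto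
  have eq: "exp_util r c (x#xs) v q - exp_util r c (x#xs) w q
      = (r x + c*(1-q) - q*V)*(v x - w x) + q*(1-w x)*(V - W)"
    unfolding exp_util_Cons V_def[symmetric] W_def[symmetric] by (simp add: algebra_simps)
  have qV: "\<bar>q*V\<bar> \<le> q" using Vb assms by (simp add: abs_mult mult_left_le)
  have cq: "0 \<le> c*(1-q)" "c*(1-q) \<le> 1 - q" using assms by (auto simp: mult_left_le_one_le mult_le_one)
  have qV2: "-q \<le> q*V" "q*V \<le> q" using qV by (auto simp: abs_le_iff)
  have coef: "\<bar>r x + c*(1-q) - q*V\<bar> \<le> 2" unfolding abs_le_iff using qV2 cq x assms by linarith
  have c2: "\<bar>q*(1-w x)\<bar> \<le> 1" using x assms by (simp add: abs_mult mult_le_one)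
  have "\<bar>(r x + c*(1-q) - q*V)*(v x - w x)\<bar> \<le> 2 * \<bar>v x - w x\<bar>"
    using coef by (simp add: abs_mult mult_right_mono)
  moreover have "\<bar>q*(1-w x)*(V - W)\<bar> \<le> \<bar>V - W\<bar>"
    using c2 by (simp add: abs_mult mult_left_le_one_le)
  moreover have "(\<Sum>x\<leftarrow>x#xs. 2 * \<bar>v x - w x\<bar>) = 2 * \<bar>v x - w x\<bar> + (\<Sum>x\<leftarrow>xs. 2 * \<bar>v x - w x\<bar>)" by simp
  ultimately show ?case unfolding eq using IH
    abs_triangle_ineq[of "(r x + c*(1-q) - q*V)*(v x - w x)" "q*(1-w x)*(V - W)"] by linarith
qed

lemma exp_util_diff_q:
  assumes "\<And>i. i \<in> set xs \<Longrightarrow> 0 \<le> r i \<and> r i \<le> 1 \<and> 0 \<le> u i \<and> u i \<le> 1"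
    and "0 \<le> c" "c \<le> 1" "0 \<le> q1" "q1 \<le> 1" "0 \<le> q2" "q2 \<le> 1"
  shows "\<bar>exp_util r c xs u q1 - exp_util r c xs u q2\<bar> \<le> 2 * real (length xs) * \<bar>q1 - q2\<bar>"
  using assms(1)
proof (induction xs)
  case Nil thus ?case by (simp add: exp_util_Nil)
next
  case (Cons x xs)
  define V where "V = exp_util r c xs u q1"
  define W where "W = exp_util r c xs u q2"
  have IH: "\<bar>V - W\<bar> \<le> 2 * real (length xs) * \<bar>q1 - q2\<bar>" using Cons unfolding V_def W_def by auto
  have Vb: "\<bar>V\<bar> \<le> 1" unfolding V_def using Cons.prems assms(2-5)
    by (intro exp_util_bound) auto
  have x: "0 \<le> u x" "u x \<le> 1" using Cons.prems by auto
  have eq: "exp_util r c (x#xs) u q1 - exp_util r c (x#xs) u q2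
      = (1 - u x) * ((c + V) * (q1 - q2) + q2 * (V - W))"
    unfolding exp_util_Cons V_def[symmetric] W_def[symmetric] by (simp add: algebra_simps)
  have cv: "\<bar>c + V\<bar> \<le> 2" using Vb assms by (auto simp: abs_le_iff)
  have "\<bar>(c + V) * (q1 - q2)\<bar> \<le> 2 * \<bar>q1 - q2\<bar>" using cv by (simp add: abs_mult mult_right_mono)
  moreover have "\<bar>q2 * (V - W)\<bar> \<le> \<bar>V - W\<bar>" using assms by (simp add: abs_mult mult_left_le_one_le)
  ultimately have "\<bar>(c + V) * (q1 - q2) + q2 * (V - W)\<bar> \<le> 2 * real (length (x#xs)) * \<bar>q1 - q2\<bar>"
    using IH abs_triangle_ineq[of "(c + V) * (q1 - q2)" "q2 * (V - W)"] by (simp add: algebra_simps)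
  moreover have "\<bar>(1 - u x) * ((c + V) * (q1 - q2) + q2 * (V - W))\<bar> \<le> \<bar>(c + V) * (q1 - q2) + q2 * (V - W)\<bar>"
    using x by (simp add: abs_mult mult_left_le_one_le)
  ultimately show ?case unfolding eq by linarith
qed

theorem lemma4:
  fixes N :: nat and r v w :: "nat \<Rightarrow> real" and c qv qw :: real and S :: "nat list"
  assumes r: "\<And>i. i \<in> {1..N} \<Longrightarrow> 0 \<le> r i \<and> r i \<le> 1"
    and c: "0 \<le> c" "c \<le> 1"
    and v: "\<And>i. i \<in> {1..N} \<Longrightarrow> 0 \<le> v i \<and> v i \<le> 1"
    and w: "\<And>i. i \<in> {1..N} \<Longrightarrow> 0 \<le> w i \<and> w i \<le> 1"
    and qv: "0 \<le> qv" "qv \<le> 1"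
    and qw: "0 \<le> qw" "qw \<le> 1"
    and S: "valid_seq N S"
    and opt: "\<And>T. valid_seq N T \<Longrightarrow> exp_util r c T v qv \<le> exp_util r c S v qv"
  shows "\<bar>exp_util r c S v qv - exp_util r c S w qw\<bar>
           \<le> (\<Sum>i\<in>set S. 2 * \<bar>v i - w i\<bar> + (real N + 1) * \<bar>qv - qw\<bar>)"
proof -
  have sub: "set S \<subseteq> {1..N}" and d: "distinct S" using S by (auto simp: valid_seq_def)
  have hyp: "\<And>i. i \<in> set S \<Longrightarrow> 0 \<le> r i \<and> r i \<le> 1 \<and> 0 \<le> v i \<and> v i \<le> 1 \<and> 0 \<le> w i \<and> w i \<le> 1"
    using sub r v w by blast
  have h1: "\<bar>exp_util r c S v qv - exp_util r c S w qv\<bar> \<le> (\<Sum>i\<in>set S. 2 * \<bar>v i - w i\<bar>)"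
  proof -
    have "\<bar>exp_util r c S v qv - exp_util r c S w qv\<bar> \<le> (\<Sum>x\<leftarrow>S. 2 * \<bar>v x - w x\<bar>)"
      by (rule exp_util_diff_u[of S r v w c qv, OF hyp c qv])
    thus ?thesis using d by (simp add: sum_list_distinct_conv_sum_set)
  qed
  have h2: "\<bar>exp_util r c S w qv - exp_util r c S w qw\<bar> \<le> 2 * real (length S) * \<bar>qv - qw\<bar>"
    by (rule exp_util_diff_q[of S r w c qv qw]) (use hyp c qv qw in auto)
  have len: "length S = card (set S)" using d by (simp add: distinct_card)
  have "card (set S) \<le> card {1..N}" using sub by (intro card_mono) auto
  hence cN: "card (set S) \<le> N" by simp
  have "2 * real (length S) \<le> real (card (set S)) * (real N + 1)"
  proof (cases "card (set S) = 0")
    case True thus ?thesis using len by simp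
  next
    case False
    hence "1 \<le> real N" using cN by linarith
    hence "2 \<le> real N + 1" by simp
    thus ?thesis using len mult_right_mono[OF \<open>2 \<le> real N + 1\<close>, of "real (card (set S))"] by (simp add: mult.commute)
  qed
  hence h3: "2 * real (length S) * \<bar>qv - qw\<bar> \<le> real (card (set S)) * (real N + 1) * \<bar>qv - qw\<bar>"
    by (simp add: mult_right_mono)
  have "(\<Sum>i\<in>set S. 2 * \<bar>v i - w i\<bar> + (real N + 1) * \<bar>qv - qw\<bar>)
      = (\<Sum>i\<in>set S. 2 * \<bar>v i - w i\<bar>) + real (card (set S)) * (real N + 1) * \<bar>qv - qw\<bar>"
    by (simp add: sum.distrib)
  thus ?thesis using h1 h2 h3 abs_triangle_ineq[of "exp_util r c S v qv - exp_util r c S w qv" "exp_util r c S w qv - exp_util r c S w qw"]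
    by linarith
qed

end
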